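(* Let $p\geq 1$, let $\Omega$ be a locally compact Hausdorff space, let $\mu$ be a nonnegative Radon measure on $\Omega$, and let $A\subseteq\Omega$ be a Borel set such that $$|f|\chi_A\leq \|f\|_p\quad \mu\text{-a.e.}\qquad\text{for every } f\in L^p(\Omega,\mu).$$ Then for every measurable function $g$ on $\Omega$ with $g\chi_A\in L^p(\Omega,\mu)$, the set $$\Gamma_g:=\big\{f\in L^p(\Omega,\mu):\ |f|\geq |g|\chi_A\ \ \mu\text{-a.e.}\big\}$$ is not $\sigma$-porous in $L^p(\Omega,\mu)$.
   Context: Porosity: Let $X$ be a metric space and $0<\lambda<1$. A set $E\subseteq X$ is $\lambda$-porous at $x\in E$ if for each $\delta>0$ there is $y\in B(x;\delta)\setminus\{x\}$ with $B(y;\lambda\, d(x,y))\cap E=\varnothing$; $E$ is $\lambda$-porous if it is $\lambda$-porous at each of its points; $E$ is $\sigma$-$\lambda$-porous if it is a countable union of $\lambda$-porous subsets of $X$. A set is called $\sigma$-porous if it is $\sigma$-$\lambda$-porous for some $\lambda\in(0,1)$; "not $\sigma$-porous" means not $\sigma$-$\lambda$-porous for any $\lambda\in(0,1)$. $B(x;r)$ denotes the open ball of radius $r$ centered at $x$. *)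

theory Defs
  imports "HOL-Analysis.Analysis"
begin

definition porous_at :: "'b set \<Rightarrow> ('b \<Rightarrow> 'b \<Rightarrow> real) \<Rightarrow> real \<Rightarrow> 'b set \<Rightarrow> 'b \<Rightarrow> bool" where
  "porous_at X d lam E x \<longleftrightarrow>
     (\<forall>\<delta>>0. \<exists>y\<in>X. d x y < \<delta> \<and> y \<noteq> x \<and>
        {z\<in>X. d y z < lam * d x y} \<inter> E = {})"

definition porous :: "'b set \<Rightarrow> ('b \<Rightarrow> 'b \<Rightarrow> real) \<Rightarrow> real \<Rightarrow> 'b set \<Rightarrow> bool" where
  "porous X d lam E \<longleftrightarrow> E \<subseteq> X \<and> (\<forall>x\<in>E. porous_at X d lam E x)"

definition sigma_porous :: "'b set \<Rightarrow> ('b \<Rightarrow> 'b \<Rightarrow> real) \<Rightarrow> real \<Rightarrow> 'b set \<Rightarrow> bool" where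
  "sigma_porous X d lam E \<longleftrightarrow>
     (\<exists>F :: nat \<Rightarrow> 'b set. (\<forall>n. porous X d lam (F n)) \<and> E = (\<Union>n. F n))"

definition radon_measure :: "'a::topological_space measure \<Rightarrow> bool" where
  "radon_measure M \<longleftrightarrow>
     sets M = sets borel \<and>
     (\<forall>K. compact K \<longrightarrow> emeasure M K < \<infinity>) \<and>
     (\<forall>B\<in>sets borel. emeasure M B = (INF U\<in>{U. open U \<and> B \<subseteq> U}. emeasure M U)) \<and>
     (\<forall>U. open U \<longrightarrow> emeasure M U = (SUP K\<in>{K. compact K \<and> K \<subseteq> U}. emeasure M K))"

definition Lp_fun :: "'a measure \<Rightarrow> real \<Rightarrow> ('a \<Rightarrow> real) set" where
  "Lp_fun M p = {f. f \<in> borel_measurable M \<and> integrable M (\<lambda>x. \<bar>f x\<bar> powr p)}"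

definition Lp_norm :: "'a measure \<Rightarrow> real \<Rightarrow> ('a \<Rightarrow> real) \<Rightarrow> real" where
  "Lp_norm M p f = (\<integral>x. \<bar>f x\<bar> powr p \<partial>M) powr (1 / p)"

definition Lp_class :: "'a measure \<Rightarrow> real \<Rightarrow> ('a \<Rightarrow> real) \<Rightarrow> ('a \<Rightarrow> real) set" where
  "Lp_class M p f = {h \<in> Lp_fun M p. AE x in M. h x = f x}"

definition Lp_space :: "'a measure \<Rightarrow> real \<Rightarrow> ('a \<Rightarrow> real) set set" where
  "Lp_space M p = Lp_class M p ` Lp_fun M p"

definition Lp_dist :: "'a measure \<Rightarrow> real \<Rightarrow> ('a \<Rightarrow> real) set \<Rightarrow> ('a \<Rightarrow> real) set \<Rightarrow> real" where
  "Lp_dist M p C D = Lp_norm M p (\<lambda>x. (SOME f. f \<in> C) x - (SOME g. g \<in> D) x)"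

end

theory Submission
  imports Defs
begin


lemma convex_pow_nonneg:
  fixes a b s p :: real
  assumes p: "1 \<le> p" and a: "0 \<le> a" and b: "0 \<le> b" and s: "0 \<le> s" "s \<le> 1"
  shows "(s * a + (1 - s) * b) powr p \<le> s * a powr p + (1 - s) * b powr p"
proof (cases "a = 0 \<or> b = 0")
  case True
  have aux: "(u * v) powr p \<le> u * v powr p" if "0 \<le> u" "u \<le> 1" "0 \<le> v" for u v :: real
  proof -
    have "(u * v) powr p = u powr p * v powr p" using that by (simp add: powr_mult)
    also have "u powr p \<le> u"
    proof (cases "u = 0")
      case False
      then have "u powr p \<le> u powr 1" using that p by (intro powr_mono') auto
      then show ?thesis using that by simp
    qed simp
    then have "u powr p * v powr p \<le> u * v powr p" by (intro mult_right_mono) auto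
    finally show ?thesis .
  qed
  show ?thesis using True
  proof
    assume "a = 0" then show ?thesis using aux[of "1 - s" b] s b by simp
  next
    assume "b = 0" then show ?thesis using aux[of s a] s a by simp
  qed
next
  case False
  then have "a > 0" "b > 0" using a b by auto
  then show ?thesis using convex_onD[OF powr_convex[OF p], of "1 - s" a b] s by auto
qed



context
  fixes M :: "'a measure" and p :: real
  assumes p1: "1 \<le> p"
begin

lemma lpn_nonneg: "0 \<le> Lp_norm M p f"
  by (simp add: Lp_norm_def)

lemma lpn_pow: "Lp_norm M p f powr p = (\<integral>x. \<bar>f x\<bar> powr p \<partial>M)"
proof -
  have I: "0 \<le> (\<integral>x. \<bar>f x\<bar> powr p \<partial>M)" by (intro integral_nonneg_AE) auto
  show ?thesis using p1 I by (simp add: Lp_norm_def powr_powr)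
qed

lemma lpn_le:
  assumes "0 \<le> r" "(\<integral>x. \<bar>f x\<bar> powr p \<partial>M) \<le> r powr p"
  shows "Lp_norm M p f \<le> r"
proof -
  have I: "0 \<le> (\<integral>x. \<bar>f x\<bar> powr p \<partial>M)" by (intro integral_nonneg_AE) auto
  have "Lp_norm M p f \<le> (r powr p) powr (1/p)"
    unfolding Lp_norm_def using I assms p1 by (intro powr_mono2) auto
  also have "\<dots> = r" using assms p1 by (simp add: powr_powr)
  finally show ?thesis .
qed

lemma lpn_less:
  assumes "0 \<le> r" "(\<integral>x. \<bar>f x\<bar> powr p \<partial>M) < r powr p"
  shows "Lp_norm M p f < r"
proof -
  have I: "0 \<le> (\<integral>x. \<bar>f x\<bar> powr p \<partial>M)" by (intro integral_nonneg_AE) auto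
  have "Lp_norm M p f < (r powr p) powr (1/p)"
    unfolding Lp_norm_def using I assms p1 by (intro powr_less_mono2) auto
  also have "\<dots> = r" using assms p1 by (simp add: powr_powr)
  finally show ?thesis .
qed

lemma lpf_bound:
  assumes f: "f \<in> Lp_fun M p" and h: "h \<in> borel_measurable M"
    and ae: "AE x in M. \<bar>h x\<bar> \<le> \<bar>f x\<bar>"
  shows "h \<in> Lp_fun M p" "Lp_norm M p h \<le> Lp_norm M p f"
proof -
  have fm: "f \<in> borel_measurable M" and fi: "integrable M (\<lambda>x. \<bar>f x\<bar> powr p)"
    using f by (auto simp: Lp_fun_def)
  have ae2: "AE x in M. \<bar>h x\<bar> powr p \<le> \<bar>f x\<bar> powr p"
    using ae by (rule eventually_mono) (use p1 in \<open>auto intro: powr_mono2\<close>)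
  have hi: "integrable M (\<lambda>x. \<bar>h x\<bar> powr p)"
    by (rule Bochner_Integration.integrable_bound[OF fi]) (use h ae2 in auto)
  then show "h \<in> Lp_fun M p" using h by (simp add: Lp_fun_def)
  have "(\<integral>x. \<bar>h x\<bar> powr p \<partial>M) \<le> (\<integral>x. \<bar>f x\<bar> powr p \<partial>M)"
    by (rule integral_mono_AE[OF hi fi ae2])
  moreover have "0 \<le> (\<integral>x. \<bar>h x\<bar> powr p \<partial>M)" by (intro integral_nonneg_AE) auto
  ultimately show "Lp_norm M p h \<le> Lp_norm M p f"
    unfolding Lp_norm_def using p1 by (intro powr_mono2) auto
qed

lemma lpn_cong:
  assumes "AE x in M. f x = g x" "f \<in> borel_measurable M" "g \<in> borel_measurable M"
  shows "Lp_norm M p f = Lp_norm M p g"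
proof -
  have "(\<integral>x. \<bar>f x\<bar> powr p \<partial>M) = (\<integral>x. \<bar>g x\<bar> powr p \<partial>M)"
    by (rule integral_cong_AE) (use assms in auto)
  then show ?thesis by (simp add: Lp_norm_def)
qed

lemma pow_sum_bound:
  fixes a b :: real
  shows "\<bar>a + b\<bar> powr p \<le> 2 powr p * (\<bar>a\<bar> powr p + \<bar>b\<bar> powr p)"
proof -
  have "\<bar>a + b\<bar> \<le> 2 * max \<bar>a\<bar> \<bar>b\<bar>" by auto
  then have "\<bar>a + b\<bar> powr p \<le> (2 * max \<bar>a\<bar> \<bar>b\<bar>) powr p"
    using p1 by (intro powr_mono2) auto
  also have "\<dots> = 2 powr p * max \<bar>a\<bar> \<bar>b\<bar> powr p" by (simp add: powr_mult)
  also have "max \<bar>a\<bar> \<bar>b\<bar> powr p \<le> \<bar>a\<bar> powr p + \<bar>b\<bar> powr p"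
    by (cases "\<bar>a\<bar> \<le> \<bar>b\<bar>") (auto simp: max_def)
  then have "2 powr p * max \<bar>a\<bar> \<bar>b\<bar> powr p \<le> 2 powr p * (\<bar>a\<bar> powr p + \<bar>b\<bar> powr p)"
    by (intro mult_left_mono) auto
  finally show ?thesis .
qed

lemma lpf_add:
  assumes f: "f \<in> Lp_fun M p" and g: "g \<in> Lp_fun M p"
  shows "(\<lambda>x. f x + g x) \<in> Lp_fun M p"
proof -
  have [measurable]: "f \<in> borel_measurable M" "g \<in> borel_measurable M"
    and fi: "integrable M (\<lambda>x. \<bar>f x\<bar> powr p)" and gi: "integrable M (\<lambda>x. \<bar>g x\<bar> powr p)"
    using f g by (auto simp: Lp_fun_def)
  have "integrable M (\<lambda>x. 2 powr p * (\<bar>f x\<bar> powr p + \<bar>g x\<bar> powr p))"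
    using fi gi by auto
  then have "integrable M (\<lambda>x. \<bar>f x + g x\<bar> powr p)"
    by (rule Bochner_Integration.integrable_bound) (measurable, auto intro!: AE_I2 simp: pow_sum_bound)
  then show ?thesis by (simp add: Lp_fun_def)
qed

lemma lpn_cmult: "Lp_norm M p (\<lambda>x. c * f x) = \<bar>c\<bar> * Lp_norm M p f"
proof -
  have I: "0 \<le> (\<integral>x. \<bar>f x\<bar> powr p \<partial>M)" by (intro integral_nonneg_AE) auto
  have "(\<integral>x. \<bar>c * f x\<bar> powr p \<partial>M) = \<bar>c\<bar> powr p * (\<integral>x. \<bar>f x\<bar> powr p \<partial>M)"
    by (simp add: abs_mult powr_mult)
  then have "Lp_norm M p (\<lambda>x. c * f x) = (\<bar>c\<bar> powr p) powr (1/p) * (\<integral>x. \<bar>f x\<bar> powr p \<partial>M) powr (1/p)"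
    using I by (simp add: Lp_norm_def powr_mult)
  also have "(\<bar>c\<bar> powr p) powr (1/p) = \<bar>c\<bar>" using p1 by (simp add: powr_powr)
  finally show ?thesis by (simp add: Lp_norm_def)
qed

lemma lpf_cmult:
  assumes f: "f \<in> Lp_fun M p"
  shows "(\<lambda>x. c * f x) \<in> Lp_fun M p"
  using f by (auto simp: Lp_fun_def abs_mult powr_mult)

lemma lpf_diff:
  assumes f: "f \<in> Lp_fun M p" and g: "g \<in> Lp_fun M p"
  shows "(\<lambda>x. f x - g x) \<in> Lp_fun M p"
  using lpf_add[OF f lpf_cmult[OF g, of "-1"]] by simp

lemma lpn_zero:
  assumes f: "f \<in> Lp_fun M p" and z: "Lp_norm M p f = 0"
  shows "AE x in M. f x = 0"
proof -
  have fi: "integrable M (\<lambda>x. \<bar>f x\<bar> powr p)" using f by (auto simp: Lp_fun_def)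
  have "(\<integral>x. \<bar>f x\<bar> powr p \<partial>M) = 0" using lpn_pow[of f] z p1 by simp
  then have "AE x in M. \<bar>f x\<bar> powr p = 0"
    using integral_nonneg_eq_0_iff_AE[OF fi] by auto
  then show ?thesis by eventually_elim simp
qed

lemma minkowski:
  assumes f: "f \<in> Lp_fun M p" and g: "g \<in> Lp_fun M p"
  shows "Lp_norm M p (\<lambda>x. f x + g x) \<le> Lp_norm M p f + Lp_norm M p g"
proof -
  define a where "a = Lp_norm M p f"
  define b where "b = Lp_norm M p g"
  have a0: "0 \<le> a" and b0: "0 \<le> b" by (auto simp: a_def b_def lpn_nonneg)
  show ?thesis
  proof (cases "a = 0 \<or> b = 0")
    case True
    then show ?thesis
    proof
      assume "a = 0"
      then have "AE x in M. f x = 0" using lpn_zero[OF f] by (simp add: a_def)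
      then have "Lp_norm M p (\<lambda>x. f x + g x) = Lp_norm M p g"
        using f g by (intro lpn_cong) (auto simp: Lp_fun_def)
      then show ?thesis using \<open>a = 0\<close> by (simp add: a_def)
    next
      assume "b = 0"
      then have "AE x in M. g x = 0" using lpn_zero[OF g] by (simp add: b_def)
      then have "Lp_norm M p (\<lambda>x. f x + g x) = Lp_norm M p f"
        using f g by (intro lpn_cong) (auto simp: Lp_fun_def)
      then show ?thesis using \<open>b = 0\<close> by (simp add: b_def)
    qed
  next
    case False
    then have ap: "0 < a" and bp: "0 < b" using a0 b0 by auto
    define s where "s = a / (a + b)"
    have s0: "0 \<le> s" "s \<le> 1" using ap bp by (auto simp: s_def)
    have s1: "1 - s = b / (a + b)" using ap bp by (simp add: s_def field_simps)
    have [measurable]: "f \<in> borel_measurable M" "g \<in> borel_measurable M"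
      and fi: "integrable M (\<lambda>x. \<bar>f x\<bar> powr p)" and gi: "integrable M (\<lambda>x. \<bar>g x\<bar> powr p)"
      using f g by (auto simp: Lp_fun_def)
    have fgi: "integrable M (\<lambda>x. \<bar>f x + g x\<bar> powr p)"
      using lpf_add[OF f g] by (simp add: Lp_fun_def)
    have pt: "\<bar>f x + g x\<bar> powr p \<le> (a + b) powr p *
        (s / a powr p * \<bar>f x\<bar> powr p + (1 - s) / b powr p * \<bar>g x\<bar> powr p)" for x
    proof -
      have e1: "s * (\<bar>f x\<bar> / a) = \<bar>f x\<bar> / (a + b)" using ap by (simp add: s_def)
      have e2: "(1 - s) * (\<bar>g x\<bar> / b) = \<bar>g x\<bar> / (a + b)" using bp by (simp add: s1)
      have e: "\<bar>f x\<bar> + \<bar>g x\<bar> = (a + b) * (s * (\<bar>f x\<bar> / a) + (1 - s) * (\<bar>g x\<bar> / b))"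
        unfolding e1 e2 using ap bp by (simp add: add_divide_distrib[symmetric])
      have "\<bar>f x + g x\<bar> powr p \<le> (\<bar>f x\<bar> + \<bar>g x\<bar>) powr p"
        using p1 by (intro powr_mono2) auto
      also have "\<dots> = (a + b) powr p * (s * (\<bar>f x\<bar> / a) + (1 - s) * (\<bar>g x\<bar> / b)) powr p"
        unfolding e using ap bp s0 by (subst powr_mult) auto
      also have "\<dots> \<le> (a + b) powr p * (s * (\<bar>f x\<bar> / a) powr p + (1 - s) * (\<bar>g x\<bar> / b) powr p)"
        using ap bp s0 by (intro mult_left_mono convex_pow_nonneg p1) auto
      also have "\<dots> = (a + b) powr p *
        (s / a powr p * \<bar>f x\<bar> powr p + (1 - s) / b powr p * \<bar>g x\<bar> powr p)"
        using ap bp by (simp add: powr_divide)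
      finally show ?thesis .
    qed
    have "(\<integral>x. \<bar>f x + g x\<bar> powr p \<partial>M) \<le> (\<integral>x. (a + b) powr p *
        (s / a powr p * \<bar>f x\<bar> powr p + (1 - s) / b powr p * \<bar>g x\<bar> powr p) \<partial>M)"
      using fi gi fgi by (intro integral_mono pt) auto
    also have "\<dots> = (a + b) powr p * (s / a powr p * (\<integral>x. \<bar>f x\<bar> powr p \<partial>M)
          + (1 - s) / b powr p * (\<integral>x. \<bar>g x\<bar> powr p \<partial>M))"
      using fi gi by simp
    also have "\<dots> = (a + b) powr p"
      using ap bp unfolding lpn_pow[symmetric] a_def[symmetric] b_def[symmetric] by simp
    finally show ?thesis using ap bp by (intro lpn_le) (auto simp: a_def b_def)
  qed
qed

lemma minkowski_diff:
  assumes f: "f \<in> Lp_fun M p" and g: "g \<in> Lp_fun M p" and h: "h \<in> Lp_fun M p"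
  shows "Lp_norm M p (\<lambda>x. f x - h x) \<le> Lp_norm M p (\<lambda>x. f x - g x) + Lp_norm M p (\<lambda>x. g x - h x)"
  using minkowski[OF lpf_diff[OF f g] lpf_diff[OF g h]] by simp

lemma lpn_sym: "Lp_norm M p (\<lambda>x. f x - g x) = Lp_norm M p (\<lambda>x. g x - f x)"
  by (simp add: Lp_norm_def abs_minus_commute)

end


definition fixv :: "real \<Rightarrow> real \<Rightarrow> real" where
  "fixv ph y = (if \<bar>y\<bar> < ph then (if 0 \<le> y then ph else - ph) else y)"

lemma fixv_ge: "0 \<le> ph \<Longrightarrow> ph \<le> \<bar>fixv ph y\<bar>"
  by (auto simp: fixv_def)

lemma fix_pt:
  fixes ph y bb t mu th :: real
  assumes th: "0 < th" "th < 1" and ph: "0 \<le> ph" and mu: "0 < mu"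
    and bb: "ph + min ((1 - th) / th * ph) mu \<le> \<bar>bb\<bar>"
    and near: "0 < ph \<longrightarrow> \<bar>bb - y\<bar> \<le> t" and t: "t < mu"
  shows "\<bar>fixv ph y - y\<bar> \<le> th * \<bar>bb - y\<bar>"
proof (cases "\<bar>y\<bar> < ph")
  case False
  then show ?thesis using th by (simp add: fixv_def)
next
  case True
  then have "0 < ph" by auto
  with near have n: "\<bar>bb - y\<bar> \<le> t" by auto
  have e: "\<bar>fixv ph y - y\<bar> = ph - \<bar>y\<bar>" using True by (auto simp: fixv_def)
  show ?thesis
  proof (cases "(1 - th) / th * ph \<le> mu")
    case False
    then have "ph + mu \<le> \<bar>bb\<bar>" using bb by simp
    moreover have "\<bar>bb\<bar> \<le> \<bar>y\<bar> + \<bar>bb - y\<bar>" by linarith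
    ultimately show ?thesis using True n t by linarith
  next
    case True2: True
    then have b2: "ph + (1 - th) / th * ph \<le> \<bar>bb\<bar>" using bb by simp
    have k: "(1 - th) / th * ph \<ge> (1 - th) / th * (ph - \<bar>y\<bar>)"
      using th by (intro mult_left_mono) auto
    have "\<bar>bb\<bar> \<le> \<bar>y\<bar> + \<bar>bb - y\<bar>" by linarith
    then have "(ph - \<bar>y\<bar>) + (1 - th) / th * (ph - \<bar>y\<bar>) \<le> \<bar>bb - y\<bar>" using b2 k by linarith
    then have "(ph - \<bar>y\<bar>) * (1 / th) \<le> \<bar>bb - y\<bar>" using th by (simp add: field_simps)
    then have "(ph - \<bar>y\<bar>) \<le> th * \<bar>bb - y\<bar>" using th by (simp add: field_simps)
    then show ?thesis using e by simp
  qed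
qed

definition good :: "'a measure \<Rightarrow> real \<Rightarrow> 'a set \<Rightarrow> ('a \<Rightarrow> real) \<Rightarrow> bool" where
  "good M p A ph \<longleftrightarrow> ph \<in> Lp_fun M p \<and> (\<forall>x. 0 \<le> ph x) \<and> (\<forall>x. 0 < ph x \<longrightarrow> x \<in> A)"

context
  fixes M :: "'a measure" and p :: real
  assumes p1: "1 \<le> p"
begin

lemma lpf_meas: "f \<in> Lp_fun M p \<Longrightarrow> f \<in> borel_measurable M"
  by (simp add: Lp_fun_def)

lemma cls_self: "f \<in> Lp_fun M p \<Longrightarrow> f \<in> Lp_class M p f"
  by (simp add: Lp_class_def)

lemma rep_cls:
  assumes "f \<in> Lp_fun M p"
  shows "(SOME h. h \<in> Lp_class M p f) \<in> Lp_fun M p"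
    "AE x in M. (SOME h. h \<in> Lp_class M p f) x = f x"
proof -
  have "(SOME h. h \<in> Lp_class M p f) \<in> Lp_class M p f"
    using someI[of "\<lambda>h. h \<in> Lp_class M p f" f] cls_self[OF assms] by simp
  then show "(SOME h. h \<in> Lp_class M p f) \<in> Lp_fun M p"
    "AE x in M. (SOME h. h \<in> Lp_class M p f) x = f x"
    by (auto simp: Lp_class_def)
qed

lemma dist_cls:
  assumes f: "f \<in> Lp_fun M p" and g: "g \<in> Lp_fun M p"
  shows "Lp_dist M p (Lp_class M p f) (Lp_class M p g) = Lp_norm M p (\<lambda>x. f x - g x)"
  unfolding Lp_dist_def
proof (rule lpn_cong[OF p1])
  show "AE x in M. (SOME h. h \<in> Lp_class M p f) x - (SOME h. h \<in> Lp_class M p g) x = f x - g x"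
    using rep_cls(2)[OF f] rep_cls(2)[OF g] by eventually_elim simp
  show "(\<lambda>x. (SOME h. h \<in> Lp_class M p f) x - (SOME h. h \<in> Lp_class M p g) x) \<in> borel_measurable M"
    using lpf_meas[OF rep_cls(1)[OF f]] lpf_meas[OF rep_cls(1)[OF g]] by measurable
  show "(\<lambda>x. f x - g x) \<in> borel_measurable M"
    using lpf_meas[OF f] lpf_meas[OF g] by measurable
qed

lemma cls_eq:
  assumes f: "f \<in> Lp_fun M p" and g: "g \<in> Lp_fun M p" and ae: "AE x in M. f x = g x"
  shows "Lp_class M p f = Lp_class M p g"
  unfolding Lp_class_def using ae by (auto elim: eventually_elim2)

lemma small_psi:
  assumes ph: "ph \<in> Lp_fun M p" "\<forall>x. 0 \<le> ph x" and k: "0 \<le> k" and e: "0 < e"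
  shows "\<exists>mu>0. Lp_norm M p (\<lambda>x. min (k * ph x) mu) \<le> e"
proof -
  have [measurable]: "ph \<in> borel_measurable M" using ph by (simp add: Lp_fun_def)
  define s where "s = (\<lambda>(n::nat) x. \<bar>min (k * ph x) (1 / (real n + 1))\<bar> powr p)"
  have wi: "integrable M (\<lambda>x. \<bar>k * ph x\<bar> powr p)"
    using lpf_cmult[OF p1 ph(1), of k] by (simp add: Lp_fun_def)
  have lim: "(\<lambda>n. integral\<^sup>L M (s n)) \<longlonglongrightarrow> integral\<^sup>L M (\<lambda>x. 0)"
  proof (rule integral_dominated_convergence[OF _ _ wi])
    show "(\<lambda>x. 0::real) \<in> borel_measurable M" by simp
    show "s n \<in> borel_measurable M" for n unfolding s_def by measurable
    show "AE x in M. (\<lambda>n. s n x) \<longlonglongrightarrow> 0"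
    proof (rule AE_I2)
      fix x
      have m: "(\<lambda>n. min (k * ph x) (1 / (real n + 1))) \<longlonglongrightarrow> 0"
      proof (rule tendsto_sandwich[of "\<lambda>n. 0" _ _ "\<lambda>n. 1 / (real n + 1)"])
        show "\<forall>\<^sub>F n in sequentially. 0 \<le> min (k * ph x) (1 / (real n + 1))"
          using k ph by (auto intro!: always_eventually)
        show "\<forall>\<^sub>F n in sequentially. min (k * ph x) (1 / (real n + 1)) \<le> 1 / (real n + 1)"
          by (auto intro!: always_eventually)
        show "(\<lambda>n. 1 / (real n + 1)) \<longlonglongrightarrow> 0" using LIMSEQ_inverse_real_of_nat by (simp add: inverse_eq_divide add.commute)
      qed simp
      have "(\<lambda>n. \<bar>min (k * ph x) (1 / (real n + 1))\<bar> powr p) \<longlonglongrightarrow> \<bar>0\<bar> powr p"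
        using p1 by (intro tendsto_powr' tendsto_rabs m) auto
      then show "(\<lambda>n. s n x) \<longlonglongrightarrow> 0" by (simp add: s_def)
    qed
    show "AE x in M. norm (s n x) \<le> \<bar>k * ph x\<bar> powr p" for n
      using k ph p1 by (auto intro!: AE_I2 powr_mono2 simp: s_def)
  qed
  have ep: "0 < e powr p" using e by simp
  from lim have "\<forall>\<^sub>F n in sequentially. integral\<^sup>L M (s n) < e powr p"
    using ep by (simp add: order_tendstoD(2))
  then obtain n where n: "integral\<^sup>L M (s n) < e powr p" by (auto simp: eventually_sequentially)
  have "Lp_norm M p (\<lambda>x. min (k * ph x) (1 / (real n + 1))) < e"
    using n e by (intro lpn_less[OF p1]) (auto simp: s_def)
  then show ?thesis by (intro exI[of _ "1 / (real n + 1)"]) auto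
qed

end



lemma step:
  fixes M :: "'a measure" and p lam r :: real and A :: "'a set" and F ph c
  assumes p1: "1 \<le> p" and lam: "0 < lam" "lam < 1"
    and hyp: "\<forall>f\<in>Lp_fun M p. AE x in M. \<bar>f x\<bar> * indicator A x \<le> Lp_norm M p f"
    and por: "porous (Lp_space M p) (Lp_dist M p) lam F"
    and lev: "good M p A ph"
    and c: "c \<in> Lp_fun M p" "AE x in M. ph x \<le> \<bar>c x\<bar>" and r: "0 < r"
  shows "\<exists>ph' c' r'. good M p A ph' \<and> (\<forall>x. ph x \<le> ph' x) \<and> c' \<in> Lp_fun M p
     \<and> (AE x in M. ph' x \<le> \<bar>c' x\<bar>) \<and> 0 < r' \<and> r' \<le> r / 4
     \<and> Lp_norm M p (\<lambda>x. c' x - c x) + r' \<le> r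
     \<and> (\<forall>w\<in>Lp_fun M p. (AE x in M. ph' x \<le> \<bar>w x\<bar>) \<and> Lp_norm M p (\<lambda>x. w x - c' x) \<le> r'
          \<longrightarrow> Lp_class M p w \<notin> F)"
proof -
  have phL: "ph \<in> Lp_fun M p" and ph0: "\<And>x. 0 \<le> ph x" and phA: "\<And>x. 0 < ph x \<Longrightarrow> x \<in> A"
    using lev by (auto simp: good_def)
  have [measurable]: "ph \<in> borel_measurable M" "c \<in> borel_measurable M"
    using phL c by (auto simp: Lp_fun_def)
  define th where "th = lam / 2"
  define k where "k = (1 - th) / th"
  have th: "0 < th" "th < 1" "th < lam" using lam by (auto simp: th_def)
  have k0: "0 \<le> k" using th by (simp add: k_def)
  obtain mu where mu: "0 < mu" and psin: "Lp_norm M p (\<lambda>x. min (k * ph x) mu) \<le> r / 8"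
    using small_psi[OF p1 phL _ k0, of "r/8"] ph0 r by auto
  define psi where "psi = (\<lambda>x. min (k * ph x) mu)"
  have psi0: "0 \<le> psi x" for x using k0 ph0[of x] mu by (simp add: psi_def)
  have psik: "psi x \<le> k * ph x" for x by (simp add: psi_def)
  have [measurable]: "psi \<in> borel_measurable M" unfolding psi_def by measurable
  have kphL: "(\<lambda>x. k * ph x) \<in> Lp_fun M p" by (rule lpf_cmult[OF p1 phL])
  have psiL: "psi \<in> Lp_fun M p"
    using psi0 psik k0 ph0 by (intro lpf_bound(1)[OF p1 kphL]) (auto intro!: AE_I2)
  define ph' where "ph' = (\<lambda>x. ph x + psi x)"
  define c' where "c' = (\<lambda>x. if 0 \<le> c x then c x + psi x else c x - psi x)"
  define r' where "r' = r / 8"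
  have [measurable]: "c' \<in> borel_measurable M" unfolding c'_def by measurable
  have good': "good M p A ph'"
    unfolding good_def ph'_def
  proof (intro conjI allI impI)
    show "(\<lambda>x. ph x + psi x) \<in> Lp_fun M p" by (rule lpf_add[OF p1 phL psiL])
    show "0 \<le> ph x + psi x" for x using ph0[of x] psi0[of x] by simp
    fix x assume "0 < ph x + psi x"
    moreover have "ph x = 0 \<Longrightarrow> psi x = 0" using mu by (simp add: psi_def)
    ultimately have "0 < ph x" using ph0[of x] by force
    then show "x \<in> A" by (rule phA)
  qed
  have dL: "(\<lambda>x. c' x - c x) \<in> Lp_fun M p" and dN: "Lp_norm M p (\<lambda>x. c' x - c x) \<le> Lp_norm M p psi"
    using psi0 by (intro lpf_bound[OF p1 psiL]; auto intro!: AE_I2 simp: c'_def)+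
  have c'L: "c' \<in> Lp_fun M p"
    using lpf_add[OF p1 c(1) dL] by simp
  have c'ae: "AE x in M. ph' x \<le> \<bar>c' x\<bar>"
    using c(2) by eventually_elim (use psi0 in \<open>auto simp: ph'_def c'_def\<close>)
  have dist1: "Lp_norm M p (\<lambda>x. c' x - c x) \<le> r / 8" using dN psin by (simp add: psi_def)
  show ?thesis
  proof (cases "\<exists>w\<in>Lp_fun M p. (AE x in M. ph' x \<le> \<bar>w x\<bar>) \<and> Lp_norm M p (\<lambda>x. w x - c' x) \<le> r'
          \<and> Lp_class M p w \<in> F")
    case False
    show ?thesis
      apply (rule exI[of _ ph'], rule exI[of _ c'], rule exI[of _ r'])
      using False good' c'L c'ae dist1 r psi0 by (auto simp: r'_def ph'_def)
  next
    case True
    then obtain w where wL: "w \<in> Lp_fun M p" and wae: "AE x in M. ph' x \<le> \<bar>w x\<bar>"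
      and wd: "Lp_norm M p (\<lambda>x. w x - c' x) \<le> r'" and wF: "Lp_class M p w \<in> F" by blast
    have [measurable]: "w \<in> borel_measurable M" using wL by (simp add: Lp_fun_def)
    have FX: "F \<subseteq> Lp_space M p" and pa: "porous_at (Lp_space M p) (Lp_dist M p) lam F (Lp_class M p w)"
      using por wF by (auto simp: porous_def)
    define de where "de = min mu (r / 8)"
    have de: "0 < de" using mu r by (simp add: de_def)
    obtain Y where YX: "Y \<in> Lp_space M p" and Yd: "Lp_dist M p (Lp_class M p w) Y < de"
      and Yne: "Y \<noteq> Lp_class M p w"
      and hole: "{z \<in> Lp_space M p. Lp_dist M p Y z < lam * Lp_dist M p (Lp_class M p w) Y} \<inter> F = {}"
      using pa de unfolding porous_at_def by blast
    obtain y where yL: "y \<in> Lp_fun M p" and Yy: "Y = Lp_class M p y"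
      using YX by (auto simp: Lp_space_def)
    have [measurable]: "y \<in> borel_measurable M" using yL by (simp add: Lp_fun_def)
    define t where "t = Lp_norm M p (\<lambda>x. w x - y x)"
    have tdist: "Lp_dist M p (Lp_class M p w) Y = t"
      unfolding Yy t_def by (rule dist_cls[OF p1 wL yL])
    have tde: "t < de" using Yd tdist by simp
    have t0: "0 < t"
    proof (rule ccontr)
      assume "\<not> 0 < t"
      then have "t = 0" using lpn_nonneg[OF p1, where M=M and f="\<lambda>x. w x - y x"] by (simp add: t_def)
      then have "AE x in M. w x - y x = 0" using lpn_zero[OF p1 lpf_diff[OF p1 wL yL]] by (simp add: t_def)
      then have "Lp_class M p w = Lp_class M p y" by (intro cls_eq[OF p1 wL yL]) auto
      then show False using Yne Yy by simp
    qed
    have near: "AE x in M. x \<in> A \<longrightarrow> \<bar>w x - y x\<bar> \<le> t"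
      using hyp lpf_diff[OF p1 wL yL] unfolding t_def by (auto elim!: eventually_mono)
    define z where "z = (\<lambda>x. fixv (ph x) (y x))"
    have [measurable]: "z \<in> borel_measurable M" unfolding z_def fixv_def by measurable
    have zy: "AE x in M. \<bar>z x - y x\<bar> \<le> \<bar>th * (w x - y x)\<bar>"
      using near wae
    proof eventually_elim
      case (elim x)
      have "\<bar>fixv (ph x) (y x) - y x\<bar> \<le> th * \<bar>w x - y x\<bar>"
      proof (rule fix_pt[OF th(1,2) ph0 mu])
        show "ph x + min ((1 - th) / th * ph x) mu \<le> \<bar>w x\<bar>"
          using elim(2) by (simp add: ph'_def psi_def k_def)
        show "0 < ph x \<longrightarrow> \<bar>w x - y x\<bar> \<le> t" using elim(1) phA by auto
        show "t < mu" using tde by (simp add: de_def)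
      qed
      then show ?case using th by (simp add: z_def abs_mult)
    qed
    have thL: "(\<lambda>x. th * (w x - y x)) \<in> Lp_fun M p" by (rule lpf_cmult[OF p1 lpf_diff[OF p1 wL yL]])
    have zyL: "(\<lambda>x. z x - y x) \<in> Lp_fun M p" and zyN: "Lp_norm M p (\<lambda>x. z x - y x) \<le> th * t"
      using lpf_bound[OF p1 thL _ zy] lpn_cmult[OF p1, where c=th and f="\<lambda>x. w x - y x"] th
      by (auto simp: t_def)
    have zL: "z \<in> Lp_fun M p" using lpf_add[OF p1 yL zyL] by simp
    have zae: "AE x in M. ph x \<le> \<bar>z x\<bar>" by (intro AE_I2) (simp add: z_def fixv_ge ph0)
    define r'' where "r'' = min (r / 4) ((lam - th) * t / 2)"
    have r''0: "0 < r''" using r th t0 by (simp add: r''_def)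
    have "Lp_norm M p (\<lambda>x. z x - c x) \<le> Lp_norm M p (\<lambda>x. z x - y x) + Lp_norm M p (\<lambda>x. y x - c x)"
      by (rule minkowski_diff[OF p1 zL yL c(1)])
    also have "Lp_norm M p (\<lambda>x. y x - c x) \<le> Lp_norm M p (\<lambda>x. y x - w x) + Lp_norm M p (\<lambda>x. w x - c x)"
      by (rule minkowski_diff[OF p1 yL wL c(1)])
    also have "Lp_norm M p (\<lambda>x. w x - c x) \<le> Lp_norm M p (\<lambda>x. w x - c' x) + Lp_norm M p (\<lambda>x. c' x - c x)"
      by (rule minkowski_diff[OF p1 wL c'L c(1)])
    finally have zc: "Lp_norm M p (\<lambda>x. z x - c x) \<le> th * t + t + r' + r / 8"
      using zyN wd dist1 lpn_sym[OF p1, where f=y and g=w] by (simp add: t_def)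
    have "th * t \<le> t" using th t0 by simp
    then have zc2: "Lp_norm M p (\<lambda>x. z x - c x) + r'' \<le> r"
    proof -
      have "r'' \<le> r / 4" by (simp add: r''_def)
      moreover have "t < r / 8" using tde min.cobounded2[of mu "r/8"] by (simp add: de_def)
      moreover have "th * t + t + r' + r / 8 \<le> r / 2"
        using \<open>th * t \<le> t\<close> \<open>t < r / 8\<close> by (simp add: r'_def)
      ultimately show ?thesis using zc r by linarith
    qed
    have disj: "Lp_class M p w' \<notin> F"
      if w'L: "w' \<in> Lp_fun M p" and w'd: "Lp_norm M p (\<lambda>x. w' x - z x) \<le> r''" for w'
    proof
      assume inF: "Lp_class M p w' \<in> F"
      have "Lp_dist M p Y (Lp_class M p w') = Lp_norm M p (\<lambda>x. y x - w' x)"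
        unfolding Yy by (rule dist_cls[OF p1 yL w'L])
      also have "\<dots> \<le> Lp_norm M p (\<lambda>x. y x - z x) + Lp_norm M p (\<lambda>x. z x - w' x)"
        by (rule minkowski_diff[OF p1 yL zL w'L])
      also have "\<dots> \<le> th * t + r''"
        using zyN w'd lpn_sym[OF p1, where f=y and g=z] lpn_sym[OF p1, where f=z and g=w'] by simp
      also have "\<dots> < lam * t"
      proof -
        have "r'' \<le> (lam - th) * t / 2" by (simp add: r''_def)
        moreover have "0 < (lam - th) * t" using th t0 by simp
        ultimately show ?thesis by (simp add: algebra_simps)
      qed
      finally have "Lp_class M p w' \<in> {z \<in> Lp_space M p. Lp_dist M p Y z < lam * Lp_dist M p (Lp_class M p w) Y}"
        using w'L tdist by (auto simp: Lp_space_def)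
      then show False using hole inF by blast
    qed
    show ?thesis
      apply (rule exI[of _ ph], rule exI[of _ z], rule exI[of _ r''])
      using lev zL zae r''0 zc2 disj by (auto simp: r''_def)
  qed
qed



lemma pt_split:
  fixes a e p :: real
  assumes "0 \<le> a" "0 < e" "1 \<le> p"
  shows "a \<le> e + a powr p / e powr (p - 1)"
proof (cases "a \<le> e")
  case True
  then show ?thesis using assms by (simp add: add_increasing2)
next
  case False
  then have ae: "e < a" by simp
  have "e powr (p - 1) \<le> a powr (p - 1)" using assms ae by (intro powr_mono2) auto
  then have "a * e powr (p - 1) \<le> a * a powr (p - 1)" using assms by (intro mult_left_mono) auto
  also have "\<dots> = a powr p" using ae assms by (simp add: powr_mult_base)
  finally have "a \<le> a powr p / e powr (p - 1)" using assms by (simp add: field_simps)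
  then show ?thesis using assms by simp
qed

lemma limit_lemma:
  fixes M :: "'a measure" and p :: real and c ph :: "nat \<Rightarrow> 'a \<Rightarrow> real" and r :: "nat \<Rightarrow> real"
  assumes p1: "1 \<le> p"
    and cL: "\<And>n. c n \<in> Lp_fun M p"
    and mono: "\<And>n x. ph n x \<le> ph (Suc n) x"
    and cae: "\<And>n. AE x in M. ph n x \<le> \<bar>c n x\<bar>"
    and rpos: "\<And>n. 0 < r n"
    and rdec: "\<And>n. Lp_norm M p (\<lambda>x. c (Suc n) x - c n x) + r (Suc n) \<le> r n"
    and rsm: "\<And>n. r (Suc n) \<le> r n / 4"
    and r0: "r 0 \<le> 1"
  shows "\<exists>z\<in>Lp_fun M p. \<forall>n. (AE x in M. ph n x \<le> \<bar>z x\<bar>) \<and> Lp_norm M p (\<lambda>x. z x - c n x) \<le> r n"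
proof -
  have cm[measurable]: "c n \<in> borel_measurable M" for n using cL[of n] by (simp add: Lp_fun_def)
  have rb: "r n \<le> (1/4)^n" for n
  proof (induction n)
    case 0 then show ?case using r0 by simp
  next
    case (Suc n) then show ?case using rsm[of n] by simp
  qed
  define h where "h = (\<lambda>n x. c (Suc n) x - c n x)"
  have hm[measurable]: "h n \<in> borel_measurable M" for n unfolding h_def by measurable
  have hL: "h n \<in> Lp_fun M p" for n unfolding h_def by (rule lpf_diff[OF p1 cL cL])
  have hN: "Lp_norm M p (h n) \<le> ((1/2)^n)^2" for n
  proof -
    have e: "((1/2::real)^n)^2 = (1/4)^n" by (simp add: power2_eq_square power_mult_distrib[symmetric])
    show ?thesis unfolding e using rdec[of n] rpos[of "Suc n"] rb[of n] by (simp add: h_def)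
  qed
  define u where "u = (\<lambda>n x. \<bar>h n x\<bar> powr p / ((1/2)^n) powr (p - 1))"
  have um[measurable]: "u n \<in> borel_measurable M" for n unfolding u_def by measurable
  have u0: "0 \<le> u n x" for n x by (simp add: u_def)
  have ui: "integrable M (u n)" for n
    using hL[of n] by (simp add: u_def Lp_fun_def)
  have uint: "integral\<^sup>L M (u n) \<le> (1/2)^n" for n
  proof -
    define q :: real where "q = (1/2)^n"
    have q: "0 < q" "q \<le> 1" by (auto simp: q_def power_le_one)
    have "integral\<^sup>L M (u n) = (\<integral>x. \<bar>h n x\<bar> powr p \<partial>M) / q powr (p - 1)"
      by (simp add: u_def q_def)
    also have "(\<integral>x. \<bar>h n x\<bar> powr p \<partial>M) = Lp_norm M p (h n) powr p"
      by (rule lpn_pow[OF p1, symmetric])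
    also have "\<dots> \<le> (q^2) powr p"
      using hN[of n] p1 by (intro powr_mono2) (auto simp: q_def lpn_nonneg[OF p1])
    also have "(q^2) powr p = q powr (2 * p)" using q by (simp add: powr_powr[symmetric] powr_realpow)
    also have "q powr (2 * p) / q powr (p - 1) = q powr (p + 1)"
      using q by (simp add: powr_diff[symmetric] algebra_simps)
    also have "\<dots> \<le> q powr 1" using q p1 by (intro powr_mono') auto
    finally show ?thesis using q by (simp add: q_def divide_right_mono)
  qed
  have sumu: "summable (\<lambda>n. integral\<^sup>L M (u n))"
  proof (rule summable_comparison_test'[OF summable_geometric[of "1/2"]])
    fix n :: nat
    have "0 \<le> integral\<^sup>L M (u n)" by (intro integral_nonneg_AE AE_I2 u0)
    then show "norm (integral\<^sup>L M (u n)) \<le> (1/2)^n" using uint[of n] by simp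
  qed simp
  have nn: "\<And>n. 0 \<le> integral\<^sup>L M (u n)" by (intro integral_nonneg_AE AE_I2 u0)
  have "(\<integral>\<^sup>+x. (\<Sum>n. ennreal (u n x)) \<partial>M) = (\<Sum>n. \<integral>\<^sup>+x. ennreal (u n x) \<partial>M)"
    by (rule nn_integral_suminf) measurable
  also have "\<dots> = (\<Sum>n. ennreal (integral\<^sup>L M (u n)))"
    using ui u0 by (intro suminf_cong nn_integral_eq_integral AE_I2) auto
  also have "\<dots> < \<infinity>"
    using ennreal_suminf_neq_top[OF sumu nn] by (simp add: less_top)
  finally have "AE x in M. (\<Sum>n. ennreal (u n x)) < \<infinity>"
    by (intro finite_nn_integral_imp_ae_finite) auto
  then have aesu: "AE x in M. summable (\<lambda>n. u n x)"
    by eventually_elim (use u0 in \<open>auto intro: summable_suminf_not_top\<close>)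
  have aesh: "AE x in M. summable (\<lambda>n. h n x)"
    using aesu
  proof eventually_elim
    case (elim x)
    have s: "summable (\<lambda>n. (1/2)^n + u n x)"
      by (intro summable_add summable_geometric elim) auto
    have b: "norm (h n x) \<le> (1/2)^n + u n x" for n
      using pt_split[of "\<bar>h n x\<bar>" "(1/2)^n" p] p1 by (simp add: u_def)
    have "summable (\<lambda>n. norm (h n x))"
    proof (rule summable_comparison_test'[OF s])
      fix n :: nat show "norm (norm (h n x)) \<le> (1/2)^n + u n x" using b[of n] by simp
    qed
    then show ?case by (rule summable_norm_cancel)
  qed
  define z where "z = (\<lambda>x. lim (\<lambda>n. c n x))"
  have zm[measurable]: "z \<in> borel_measurable M" unfolding z_def by measurable
  have aelim: "AE x in M. (\<lambda>n. c n x) \<longlonglongrightarrow> z x"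
    using aesh
  proof eventually_elim
    case (elim x)
    have "(\<lambda>n. \<Sum>i<n. h i x) \<longlonglongrightarrow> (\<Sum>i. h i x)" using elim by (rule summable_LIMSEQ)
    moreover have "(\<lambda>n. \<Sum>i<n. h i x) = (\<lambda>n. c n x - c 0 x)"
      unfolding h_def using sum_lessThan_telescope[of "\<lambda>i. c i x"] by simp
    ultimately have "(\<lambda>n. c n x - c 0 x + c 0 x) \<longlonglongrightarrow> (\<Sum>i. h i x) + c 0 x"
      by (intro tendsto_add) auto
    then have "convergent (\<lambda>n. c n x)" by (auto simp: convergent_def)
    then show ?case by (simp add: z_def convergent_LIMSEQ_iff)
  qed
  have chain: "Lp_norm M p (\<lambda>x. c (m + n) x - c n x) \<le> r n - r (m + n)" for m n
  proof (induction m)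
    case 0
    have "Lp_norm M p (\<lambda>x. c n x - c n x) = 0" by (simp add: Lp_norm_def)
    then show ?case by simp
  next
    case (Suc m)
    have "Lp_norm M p (\<lambda>x. c (Suc m + n) x - c n x)
        \<le> Lp_norm M p (\<lambda>x. c (Suc (m + n)) x - c (m + n) x) + Lp_norm M p (\<lambda>x. c (m + n) x - c n x)"
      using minkowski_diff[OF p1 cL cL cL] by simp
    then show ?case using Suc rdec[of "m + n"] by simp
  qed
  have bound: "(\<integral>\<^sup>+x. ennreal (\<bar>z x - c n x\<bar> powr p) \<partial>M) \<le> ennreal (r n powr p)" for n
  proof -
    define v where "v = (\<lambda>m x. ennreal (\<bar>c (m + n) x - c n x\<bar> powr p))"
    have vm[measurable]: "v m \<in> borel_measurable M" for m unfolding v_def by measurable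
    have "AE x in M. ennreal (\<bar>z x - c n x\<bar> powr p) = liminf (\<lambda>m. v m x)"
      using aelim
    proof eventually_elim
      case (elim x)
      have "(\<lambda>m. c (m + n) x) \<longlonglongrightarrow> z x" using elim by (rule LIMSEQ_ignore_initial_segment)
      then have "(\<lambda>m. \<bar>c (m + n) x - c n x\<bar> powr p) \<longlonglongrightarrow> \<bar>z x - c n x\<bar> powr p"
        using p1 by (intro tendsto_powr' tendsto_rabs tendsto_diff) auto
      then have "(\<lambda>m. v m x) \<longlonglongrightarrow> ennreal (\<bar>z x - c n x\<bar> powr p)"
        unfolding v_def by (rule tendsto_ennrealI)
      then show ?case by (simp add: lim_imp_Liminf)
    qed
    then have "(\<integral>\<^sup>+x. ennreal (\<bar>z x - c n x\<bar> powr p) \<partial>M) = (\<integral>\<^sup>+x. liminf (\<lambda>m. v m x) \<partial>M)"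
      by (rule nn_integral_cong_AE)
    also have "\<dots> \<le> liminf (\<lambda>m. integral\<^sup>N M (v m))"
      by (rule nn_integral_liminf) measurable
    also have "\<dots> \<le> liminf (\<lambda>m. ennreal (r n powr p))"
    proof (intro Liminf_mono always_eventually allI)
      fix m
      have dL: "(\<lambda>x. c (m + n) x - c n x) \<in> Lp_fun M p" by (rule lpf_diff[OF p1 cL cL])
      then have di: "integrable M (\<lambda>x. \<bar>c (m + n) x - c n x\<bar> powr p)" by (simp add: Lp_fun_def)
      have "integral\<^sup>N M (v m) = ennreal (\<integral>x. \<bar>c (m + n) x - c n x\<bar> powr p \<partial>M)"
        unfolding v_def using di by (intro nn_integral_eq_integral) auto
      also have "(\<integral>x. \<bar>c (m + n) x - c n x\<bar> powr p \<partial>M) = Lp_norm M p (\<lambda>x. c (m + n) x - c n x) powr p"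
        by (rule lpn_pow[OF p1, symmetric])
      also have "\<dots> \<le> r n powr p"
        using chain[of m n] rpos[of "m + n"] p1 by (intro powr_mono2) (auto simp: lpn_nonneg[OF p1])
      finally show "integral\<^sup>N M (v m) \<le> ennreal (r n powr p)" by (simp add: ennreal_leI)
    qed
    also have "\<dots> = ennreal (r n powr p)" by (simp add: Liminf_const)
    finally show ?thesis .
  qed
  have zcL: "(\<lambda>x. z x - c n x) \<in> Lp_fun M p" and zcN: "Lp_norm M p (\<lambda>x. z x - c n x) \<le> r n" for n
  proof -
    have ii: "integrable M (\<lambda>x. \<bar>z x - c n x\<bar> powr p)"
    proof (rule integrableI_bounded)
      show "(\<lambda>x. \<bar>z x - c n x\<bar> powr p) \<in> borel_measurable M" by measurable
      show "(\<integral>\<^sup>+x. ennreal (norm (\<bar>z x - c n x\<bar> powr p)) \<partial>M) < \<infinity>"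
        using bound[of n] by (simp add: le_less_trans)
    qed
    then show "(\<lambda>x. z x - c n x) \<in> Lp_fun M p" by (simp add: Lp_fun_def)
    have "(\<integral>x. \<bar>z x - c n x\<bar> powr p \<partial>M) = enn2real (\<integral>\<^sup>+x. ennreal (\<bar>z x - c n x\<bar> powr p) \<partial>M)"
      by (rule integral_eq_nn_integral) auto
    also have "\<dots> \<le> enn2real (ennreal (r n powr p))"
      using bound[of n] by (intro enn2real_mono) auto
    also have "\<dots> = r n powr p" by simp
    finally show "Lp_norm M p (\<lambda>x. z x - c n x) \<le> r n"
      using rpos[of n] by (intro lpn_le[OF p1]) auto
  qed
  have zL: "z \<in> Lp_fun M p" using lpf_add[OF p1 cL zcL, of 0 0] by simp
  have phmono: "ph n x \<le> ph (m + n) x" for m n x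
  proof (induction m)
    case (Suc m) then show ?case using mono[of "m + n" x] by simp
  qed simp
  have zph: "AE x in M. ph n x \<le> \<bar>z x\<bar>" for n
  proof -
    have "AE x in M. \<forall>m. ph m x \<le> \<bar>c m x\<bar>" using cae by (simp add: AE_all_countable)
    then show ?thesis using aelim
    proof eventually_elim
      case (elim x)
      have "(\<lambda>m. \<bar>c (m + n) x\<bar>) \<longlonglongrightarrow> \<bar>z x\<bar>"
        by (intro tendsto_rabs LIMSEQ_ignore_initial_segment elim)
      moreover have "\<forall>m\<ge>0. ph n x \<le> \<bar>c (m + n) x\<bar>"
      proof (intro allI impI)
        fix m :: nat
        show "ph n x \<le> \<bar>c (m + n) x\<bar>" using phmono[of n x m] elim(1)[rule_format, of "m + n"] by linarith
      qed
      ultimately show ?case by (intro LIMSEQ_le_const) auto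
    qed
  qed
  show ?thesis using zL zph zcN by blast
qed



theorem theorem2p3:
  fixes M :: "'a::t2_space measure" and p :: real and A :: "'a set" and g :: "'a \<Rightarrow> real"
  assumes "p \<ge> 1"
    and "locally_compact_space (euclidean :: 'a topology)"
    and "radon_measure M"
    and "A \<in> sets borel"
    and "\<forall>f\<in>Lp_fun M p. AE x in M. \<bar>f x\<bar> * indicator A x \<le> Lp_norm M p f"
    and "g \<in> borel_measurable M"
    and "(\<lambda>x. g x * indicator A x) \<in> Lp_fun M p"
  shows "\<forall>lam. 0 < lam \<and> lam < 1 \<longrightarrow>
           \<not> sigma_porous (Lp_space M p) (Lp_dist M p) lam
               {Lp_class M p f | f. f \<in> Lp_fun M p \<and>
                   (AE x in M. \<bar>f x\<bar> \<ge> \<bar>g x\<bar> * indicator A x)}"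
proof (intro allI impI notI)
  fix lam :: real
  assume lam: "0 < lam \<and> lam < 1"
  have p1: "1 \<le> p" using assms(1) by simp
  note hyp = assms(5)
  assume "sigma_porous (Lp_space M p) (Lp_dist M p) lam
               {Lp_class M p f | f. f \<in> Lp_fun M p \<and>
                   (AE x in M. \<bar>f x\<bar> \<ge> \<bar>g x\<bar> * indicator A x)}"
  then obtain F :: "nat \<Rightarrow> (('a \<Rightarrow> real) set) set" where por: "\<And>n. porous (Lp_space M p) (Lp_dist M p) lam (F n)"
    and EF: "{Lp_class M p f | f. f \<in> Lp_fun M p \<and>
                   (AE x in M. \<bar>f x\<bar> \<ge> \<bar>g x\<bar> * indicator A x)} = (\<Union>n. F n)"
    unfolding sigma_porous_def by blast
  define Inv where "Inv = (\<lambda>(s :: ('a \<Rightarrow> real) \<times> ('a \<Rightarrow> real) \<times> real).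
      good M p A (fst s) \<and> fst (snd s) \<in> Lp_fun M p \<and> (AE x in M. fst s x \<le> \<bar>fst (snd s) x\<bar>)
      \<and> 0 < snd (snd s))"
  define Rel where "Rel = (\<lambda>n (s :: ('a \<Rightarrow> real) \<times> ('a \<Rightarrow> real) \<times> real) (s' :: ('a \<Rightarrow> real) \<times> ('a \<Rightarrow> real) \<times> real).
      (\<forall>x. fst s x \<le> fst s' x) \<and> snd (snd s') \<le> snd (snd s) / 4
      \<and> Lp_norm M p (\<lambda>x. fst (snd s') x - fst (snd s) x) + snd (snd s') \<le> snd (snd s)
      \<and> (\<forall>w\<in>Lp_fun M p. (AE x in M. fst s' x \<le> \<bar>w x\<bar>) \<and> Lp_norm M p (\<lambda>x. w x - fst (snd s') x) \<le> snd (snd s')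
          \<longrightarrow> Lp_class M p w \<notin> F n))"
  have ex: "\<exists>s'. Inv s' \<and> Rel n s s'" if "Inv s" for n s
  proof -
    obtain ph c r where s: "s = (ph, c, r)" by (cases s) auto
    have "\<exists>ph' c' r'. good M p A ph' \<and> (\<forall>x. ph x \<le> ph' x) \<and> c' \<in> Lp_fun M p
     \<and> (AE x in M. ph' x \<le> \<bar>c' x\<bar>) \<and> 0 < r' \<and> r' \<le> r / 4
     \<and> Lp_norm M p (\<lambda>x. c' x - c x) + r' \<le> r
     \<and> (\<forall>w\<in>Lp_fun M p. (AE x in M. ph' x \<le> \<bar>w x\<bar>) \<and> Lp_norm M p (\<lambda>x. w x - c' x) \<le> r'
          \<longrightarrow> Lp_class M p w \<notin> F n)"
      using that s lam by (intro step[OF p1 _ _ hyp por]) (auto simp: Inv_def)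
    then obtain ph' c' r' where "good M p A ph' \<and> (\<forall>x. ph x \<le> ph' x) \<and> c' \<in> Lp_fun M p
     \<and> (AE x in M. ph' x \<le> \<bar>c' x\<bar>) \<and> 0 < r' \<and> r' \<le> r / 4
     \<and> Lp_norm M p (\<lambda>x. c' x - c x) + r' \<le> r
     \<and> (\<forall>w\<in>Lp_fun M p. (AE x in M. ph' x \<le> \<bar>w x\<bar>) \<and> Lp_norm M p (\<lambda>x. w x - c' x) \<le> r'
          \<longrightarrow> Lp_class M p w \<notin> F n)" by blast
    then show ?thesis
      by (intro exI[of _ "(ph', c', r')"]) (auto simp: Inv_def Rel_def s)
  qed
  define c0 where "c0 = (\<lambda>x. g x * indicator A x)"
  define ph0 where "ph0 = (\<lambda>x. \<bar>c0 x\<bar>)"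
  have c0L: "c0 \<in> Lp_fun M p" using assms(7) by (simp add: c0_def)
  have [measurable]: "c0 \<in> borel_measurable M" using c0L by (simp add: Lp_fun_def)
  have ph0L: "ph0 \<in> Lp_fun M p"
    using lpf_bound(1)[OF p1 c0L, of ph0] by (auto simp: ph0_def)
  have good0: "good M p A ph0"
    using ph0L by (auto simp: good_def ph0_def c0_def indicator_def split: if_splits)
  define s0 where "s0 = (ph0, c0, 1::real)"
  have inv0: "Inv s0" using good0 c0L by (auto simp: Inv_def s0_def ph0_def)
  define nxt where "nxt = (\<lambda>n s. SOME s'. Inv s' \<and> Rel n s s')"
  define S where "S = rec_nat s0 nxt"
  have S0: "S 0 = s0" and SS: "S (Suc n) = nxt n (S n)" for n by (simp_all add: S_def)
  have stepS: "Inv (S (Suc n)) \<and> Rel n (S n) (S (Suc n))" if "Inv (S n)" for n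
    unfolding SS nxt_def by (rule someI_ex[OF ex[OF that]])
  have invS: "Inv (S n)" for n
  proof (induction n)
    case 0 show ?case unfolding S0 by (rule inv0)
  next
    case (Suc n) then show ?case using stepS by blast
  qed
  have all: "Inv (S n) \<and> Rel n (S n) (S (Suc n))" for n using invS stepS by blast
  define ph where "ph = (\<lambda>n. fst (S n))"
  define c where "c = (\<lambda>n. fst (snd (S n)))"
  define r where "r = (\<lambda>n. snd (snd (S n)))"
  have "\<exists>z\<in>Lp_fun M p. \<forall>n. (AE x in M. ph n x \<le> \<bar>z x\<bar>) \<and> Lp_norm M p (\<lambda>x. z x - c n x) \<le> r n"
  proof (rule limit_lemma[OF p1])
    show "c n \<in> Lp_fun M p" for n using all[of n] by (simp add: Inv_def c_def)
    show "ph n x \<le> ph (Suc n) x" for n x using all[of n] by (simp add: Rel_def ph_def)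
    show "AE x in M. ph n x \<le> \<bar>c n x\<bar>" for n using all[of n] by (simp add: Inv_def ph_def c_def)
    show "0 < r n" for n using all[of n] by (simp add: Inv_def r_def)
    show "Lp_norm M p (\<lambda>x. c (Suc n) x - c n x) + r (Suc n) \<le> r n" for n
      using all[of n] by (simp add: Rel_def r_def c_def)
    show "r (Suc n) \<le> r n / 4" for n using all[of n] by (simp add: Rel_def r_def)
    show "r 0 \<le> 1" by (simp add: r_def S0 s0_def)
  qed
  then obtain z where zL: "z \<in> Lp_fun M p"
    and zn: "\<And>n. (AE x in M. ph n x \<le> \<bar>z x\<bar>) \<and> Lp_norm M p (\<lambda>x. z x - c n x) \<le> r n" by blast
  have "AE x in M. \<bar>z x\<bar> \<ge> \<bar>g x\<bar> * indicator A x"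
    using zn[of 0] by (auto simp: ph_def S0 s0_def ph0_def c0_def abs_mult elim!: eventually_mono)
  then have "Lp_class M p z \<in> (\<Union>n. F n)" using zL EF[symmetric] by blast
  then obtain n where zF: "Lp_class M p z \<in> F n" by blast
  have "Rel n (S n) (S (Suc n))" using all by simp
  then have "Lp_class M p z \<notin> F n"
    using zL zn[of "Suc n"] by (auto simp: Rel_def ph_def c_def r_def)
  then show False using zF by simp
qed


end
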